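(* Let $\lambda_1,\lambda_2\ge0$ and let $\mathbf m\in\mathcal B(\lambda+\rho)_{res}$ be the head of its resonance family $RF(\mathbf m)$. If $RF(\mathbf m)\cap\mathcal B(\lambda+\rho)=\emptyset$, then $$RF(\mathbf m)=\{f_1^{t_1}f_2^{t_2}\mathbf m:\ 0\le t_1\le s_6+1,\ 0\le t_2\le\min\{s_2,s_5\}+1\},$$ where $s_2,s_5,s_6$ are the bounding data of $\mathbf m$ (and all these iterated lowerings are nonzero).
   Context: For $\mathbf m\in\mathbb Z_{\ge0}^6$ and integers $\lambda_1,\lambda_2\ge0$: $s_1=\lambda_2+m_5+m_6-m_1-m_2-m_3$, $s_2=\lambda_2+m_5+m_6-m_2-2m_3$, $s_3=\lambda_2+m_6-m_3-m_4$, $s_4=\lambda_2+m_6-m_4-m_5$, $s_5=\lambda_2-m_5$, $s_6=\lambda_1-m_6$. $\mathcal B(\lambda+\rho)$: all $s_j\ge-1$ and $2s_3-s_4\ge-1$. $\mathcal B(\lambda+\rho)_{res}$: $m_3=m_5$, $s_j\ge-1$ for $j\in\{1,2,5,6\}$, $s_3=s_4\le0$ even; decoration $d(\mathbf m)=-s_3/2$. Weight $k(\mathbf m)=(m_2+3m_3+2m_4+3m_5+m_6,\ m_1+m_2+2m_3+m_4+m_5)$. Arrays $\left[\begin{smallmatrix}a&b&c&b&d\\&x&y&z&\\&&k&&\end{smallmatrix}\right]$ (entries in $\mathbb Z_{\ge0}$) with operators: $e_1$: $(a,c,d;y;k)\mapsto(a-1,c+1,d-1;y+1;k+1)$, zero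 if $\min\{a,d\}=0$; $e_2$: $(b,c;x,z;k)\mapsto(b-1,c+3;x+1,z+1;k+1)$, zero if $b=0$; $f_1$: $(a,c,d;y;k)\mapsto(a+1,c-1,d+1;y-1;k-1)$, zero if $\min\{c,y,k\}=0$; $f_2$: $(b,c;x,z;k)\mapsto(b+1,c-3;x-1,z-1;k-1)$, zero if $\min\{x,z,k\}=0$ or $c<3$ (unlisted entries unchanged; both copies of $b$ change together). $A(\mathbf m)=\left[\begin{smallmatrix}m_2&m_5&m_4&m_5&m_6\\&s_2+1&s_6+1&s_5+1&\\&&d(\mathbf m)&&\end{smallmatrix}\right]$. On Lusztig data, $f_1(\mathbf m)=(m_1,m_2+1,m_3,m_4-1,m_5,m_6+1)$ and $f_2(\mathbf m)=(m_1,m_2,m_3+1,m_4-3,m_5+1,m_6)$, defined (nonzero) exactly when $f_i(A(\mathbf m))\ne0$, and $e_1(\mathbf m)=(m_1,m_2-1,m_3,m_4+1,m_5,m_6-1)$, $e_2(\mathbf m)=(m_1,m_2,m_3-1,m_4+3,m_5-1,m_6)$ likewise. For an array $A$, $\epsilon_i(A)=\max\{n\ge0:e_i^n(A)\ne0\}$ and $\mathrm{hd}(A)=e_1^{\epsilon_1(A)}e_2^{\epsilon_2(A)}(A)$. On $\mathcal B(\lambda+\rho)_{res}$, $\mathbf m\sim\mathbf n$ iff $k(\mathbf m)=k(\mathbf n)$ and $\mathrm{hd}(A(\mathbf m))=\mathrm{hd}(A(\mathbf n))$; the equivalence class of $\mathbf m$ is its resonance family $RF(\mathbf m)$. The head of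 a resonance family is its unique element $\mathbf n$ with $A(\mathbf n)=\mathrm{hd}(A(\mathbf n))$; it has the form $(n_1,0,0,n_4,0,0)$, $(n_1,n_2,0,n_4,0,0)$ or $(n_1,0,0,n_4,0,n_6)$. *)

theory Defs
  imports Main
begin

datatype ld = LD (m1: nat) (m2: nat) (m3: nat) (m4: nat) (m5: nat) (m6: nat)

definition s1 :: "nat \<Rightarrow> ld \<Rightarrow> int" where
  "s1 l2 m = int l2 + int (m5 m) + int (m6 m) - int (m1 m) - int (m2 m) - int (m3 m)"
definition s2 :: "nat \<Rightarrow> ld \<Rightarrow> int" where
  "s2 l2 m = int l2 + int (m5 m) + int (m6 m) - int (m2 m) - 2 * int (m3 m)"
definition s3 :: "nat \<Rightarrow> ld \<Rightarrow> int" where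
  "s3 l2 m = int l2 + int (m6 m) - int (m3 m) - int (m4 m)"
definition s4 :: "nat \<Rightarrow> ld \<Rightarrow> int" where
  "s4 l2 m = int l2 + int (m6 m) - int (m4 m) - int (m5 m)"
definition s5 :: "nat \<Rightarrow> ld \<Rightarrow> int" where
  "s5 l2 m = int l2 - int (m5 m)"
definition s6 :: "nat \<Rightarrow> ld \<Rightarrow> int" where
  "s6 l1 m = int l1 - int (m6 m)"

definition Bset :: "nat \<Rightarrow> nat \<Rightarrow> ld set" where
  "Bset l1 l2 = {m. s1 l2 m \<ge> -1 \<and> s2 l2 m \<ge> -1 \<and> s3 l2 m \<ge> -1 \<and> s4 l2 m \<ge> -1
      \<and> s5 l2 m \<ge> -1 \<and> s6 l1 m \<ge> -1 \<and> 2 * s3 l2 m - s4 l2 m \<ge> -1}"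

definition Bres :: "nat \<Rightarrow> nat \<Rightarrow> ld set" where
  "Bres l1 l2 = {m. m3 m = m5 m \<and> s1 l2 m \<ge> -1 \<and> s2 l2 m \<ge> -1 \<and> s5 l2 m \<ge> -1
      \<and> s6 l1 m \<ge> -1 \<and> s3 l2 m = s4 l2 m \<and> s3 l2 m \<le> 0 \<and> even (s3 l2 m)}"

text \<open>Decoration d(m) = -s_3/2 (a nonnegative integer on Bres).\<close>
definition deco :: "nat \<Rightarrow> ld \<Rightarrow> nat" where
  "deco l2 m = nat (- (s3 l2 m) div 2)"

definition wt :: "ld \<Rightarrow> nat \<times> nat" where
  "wt m = (m2 m + 3 * m3 m + 2 * m4 m + 3 * m5 m + m6 m,
           m1 m + m2 m + 2 * m3 m + m4 m + m5 m)"

text \<open>Arrays [a b c b d; x y z; k] with entries in Z>=0.\<close>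
datatype arr = Arr (ar_a: nat) (ar_b: nat) (ar_c: nat) (ar_d: nat)
                   (ar_x: nat) (ar_y: nat) (ar_z: nat) (ar_k: nat)

text \<open>Operators on arrays; None represents zero.\<close>
fun e1A :: "arr \<Rightarrow> arr option" where
  "e1A (Arr a b c d x y z k) =
     (if min a d = 0 then None else Some (Arr (a - 1) b (c + 1) (d - 1) x (y + 1) z (k + 1)))"
fun e2A :: "arr \<Rightarrow> arr option" where
  "e2A (Arr a b c d x y z k) =
     (if b = 0 then None else Some (Arr a (b - 1) (c + 3) d (x + 1) y (z + 1) (k + 1)))"
fun f1A :: "arr \<Rightarrow> arr option" where
  "f1A (Arr a b c d x y z k) =
     (if min c (min y k) = 0 then None else Some (Arr (a + 1) b (c - 1) (d + 1) x (y - 1) z (k - 1)))"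
fun f2A :: "arr \<Rightarrow> arr option" where
  "f2A (Arr a b c d x y z k) =
     (if min x (min z k) = 0 \<or> c < 3 then None
      else Some (Arr a (b + 1) (c - 3) d (x - 1) y (z - 1) (k - 1)))"

definition iterp :: "nat \<Rightarrow> ('a \<Rightarrow> 'a option) \<Rightarrow> 'a option \<Rightarrow> 'a option" where
  "iterp n g = (\<lambda>u. Option.bind u g) ^^ n"

definition eps1 :: "arr \<Rightarrow> nat" where
  "eps1 A = (GREATEST n. iterp n e1A (Some A) \<noteq> None)"
definition eps2 :: "arr \<Rightarrow> nat" where
  "eps2 A = (GREATEST n. iterp n e2A (Some A) \<noteq> None)"

definition hdA :: "arr \<Rightarrow> arr option" where
  "hdA A = iterp (eps1 A) e1A (iterp (eps2 A) e2A (Some A))"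

definition Aof :: "nat \<Rightarrow> nat \<Rightarrow> ld \<Rightarrow> arr" where
  "Aof l1 l2 m = Arr (m2 m) (m5 m) (m4 m) (m6 m)
      (nat (s2 l2 m + 1)) (nat (s6 l1 m + 1)) (nat (s5 l2 m + 1)) (deco l2 m)"

definition f1L :: "nat \<Rightarrow> nat \<Rightarrow> ld \<Rightarrow> ld option" where
  "f1L l1 l2 m = (if f1A (Aof l1 l2 m) = None then None
     else Some (LD (m1 m) (m2 m + 1) (m3 m) (m4 m - 1) (m5 m) (m6 m + 1)))"
definition f2L :: "nat \<Rightarrow> nat \<Rightarrow> ld \<Rightarrow> ld option" where
  "f2L l1 l2 m = (if f2A (Aof l1 l2 m) = None then None
     else Some (LD (m1 m) (m2 m) (m3 m + 1) (m4 m - 3) (m5 m + 1) (m6 m)))"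

definition RF :: "nat \<Rightarrow> nat \<Rightarrow> ld \<Rightarrow> ld set" where
  "RF l1 l2 m = {n \<in> Bres l1 l2. wt n = wt m \<and> hdA (Aof l1 l2 n) = hdA (Aof l1 l2 m)}"

definition is_head :: "nat \<Rightarrow> nat \<Rightarrow> ld \<Rightarrow> bool" where
  "is_head l1 l2 m \<longleftrightarrow> m \<in> Bres l1 l2 \<and> hdA (Aof l1 l2 m) = Some (Aof l1 l2 m)"

end

theory Submission imports Defs begin

lemma iterp_0[simp]: "iterp 0 g u = u" by (simp add: iterp_def)
lemma iterp_Suc: "iterp (Suc n) g u = Option.bind (iterp n g u) g" by (simp add: iterp_def)
lemma iterp_None[simp]: "iterp n g None = None" by (induct n) (simp_all add: iterp_Suc)

lemma iter_e2: "iterp n e2A (Some (Arr a b c d x y z k)) =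
  (if n \<le> b then Some (Arr a (b-n) (c+3*n) d (x+n) y (z+n) (k+n)) else None)"
  by (induct n) (auto simp: iterp_Suc)

lemma iter_e1: "iterp n e1A (Some (Arr a b c d x y z k)) =
  (if n \<le> min a d then Some (Arr (a-n) b (c+n) (d-n) x (y+n) z (k+n)) else None)"
  by (induct n) (auto simp: iterp_Suc)

lemma eps2: "eps2 (Arr a b c d x y z k) = b"
  unfolding eps2_def iter_e2 by (rule Greatest_equality) (auto split: if_splits)
lemma eps1: "eps1 (Arr a b c d x y z k) = min a d"
  unfolding eps1_def iter_e1 by (rule Greatest_equality) (auto split: if_splits)

lemma hdA_Arr: "hdA (Arr a b c d x y z k) = Some (Arr (a - min a d) 0 (c + 3*b + min a d)
   (d - min a d) (x+b) (y + min a d) (z+b) (k+b+min a d))"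
  by (simp add: hdA_def eps1 eps2 iter_e2 iter_e1)

lemma deco_eq: "s3 l2 m = - 2 * int D \<Longrightarrow> deco l2 m = D" by (simp add: deco_def)

lemma iter_f2L:
  assumes "s3 l2 m = - 2 * int D" "s2 l2 m \<ge> -1" "s5 l2 m \<ge> -1"
  shows "iterp n (f2L l1 l2) (Some m) = (if int n \<le> s2 l2 m + 1 \<and> int n \<le> s5 l2 m + 1 \<and> n \<le> D \<and> 3*n \<le> m4 m
     then Some (LD (m1 m) (m2 m) (m3 m + n) (m4 m - 3*n) (m5 m + n) (m6 m)) else None)"
proof (induct n)
  case 0 show ?case using assms by simp
next
  case (Suc n)
  show ?case
  proof (cases "int n \<le> s2 l2 m + 1 \<and> int n \<le> s5 l2 m + 1 \<and> n \<le> D \<and> 3*n \<le> m4 m")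
    case False then show ?thesis using Suc by (auto simp: iterp_Suc)
  next
    case True
    define m' where "m' = LD (m1 m) (m2 m) (m3 m + n) (m4 m - 3*n) (m5 m + n) (m6 m)"
    have "s3 l2 m' = - 2 * int (D - n)" using True assms(1) by (simp add: m'_def s3_def)
    hence d: "deco l2 m' = D - n" by (rule deco_eq)
    have "f2L l1 l2 m' = (if int (Suc n) \<le> s2 l2 m + 1 \<and> int (Suc n) \<le> s5 l2 m + 1 \<and> Suc n \<le> D \<and> 3*Suc n \<le> m4 m
     then Some (LD (m1 m) (m2 m) (m3 m + Suc n) (m4 m - 3*Suc n) (m5 m + Suc n) (m6 m)) else None)"
      using True unfolding f2L_def Aof_def d by (auto simp: m'_def s2_def s5_def)
    then show ?thesis using Suc True by (simp add: iterp_Suc m'_def)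
  qed
qed

lemma iter_f1L:
  assumes "s3 l2 m = - 2 * int D" "s6 l1 m \<ge> -1"
  shows "iterp n (f1L l1 l2) (Some m) = (if int n \<le> s6 l1 m + 1 \<and> n \<le> D \<and> n \<le> m4 m
     then Some (LD (m1 m) (m2 m + n) (m3 m) (m4 m - n) (m5 m) (m6 m + n)) else None)"
proof (induct n)
  case 0 show ?case using assms by simp
next
  case (Suc n)
  show ?case
  proof (cases "int n \<le> s6 l1 m + 1 \<and> n \<le> D \<and> n \<le> m4 m")
    case False then show ?thesis using Suc by (auto simp: iterp_Suc)
  next
    case True
    define m' where "m' = LD (m1 m) (m2 m + n) (m3 m) (m4 m - n) (m5 m) (m6 m + n)"
    have "s3 l2 m' = - 2 * int (D - n)" using True assms(1) by (simp add: m'_def s3_def)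
    hence d: "deco l2 m' = D - n" by (rule deco_eq)
    have "f1L l1 l2 m' = (if int (Suc n) \<le> s6 l1 m + 1 \<and> Suc n \<le> D \<and> Suc n \<le> m4 m
     then Some (LD (m1 m) (m2 m + Suc n) (m3 m) (m4 m - Suc n) (m5 m) (m6 m + Suc n)) else None)"
      using True unfolding f1L_def Aof_def d by (auto simp: m'_def s6_def)
    then show ?thesis using Suc True by (simp add: iterp_Suc m'_def)
  qed
qed

lemma natl: "int t \<le> a \<Longrightarrow> nat (a - int t) + t = nat a" by arith

theorem mainTheorem8:
  fixes l1 l2 :: nat and m :: ld
  assumes "m \<in> Bres l1 l2"
    and "is_head l1 l2 m"
    and "RF l1 l2 m \<inter> Bset l1 l2 = {}"
  shows "(\<forall>t1 t2. int t1 \<le> s6 l1 m + 1 \<longrightarrow> int t2 \<le> min (s2 l2 m) (s5 l2 m) + 1 \<longrightarrow>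
            iterp t1 (f1L l1 l2) (iterp t2 (f2L l1 l2) (Some m)) \<noteq> None)
       \<and> RF l1 l2 m = {the (iterp t1 (f1L l1 l2) (iterp t2 (f2L l1 l2) (Some m))) | t1 t2.
            int t1 \<le> s6 l1 m + 1 \<and> int t2 \<le> min (s2 l2 m) (s5 l2 m) + 1}"
proof -
  have B: "m3 m = m5 m" "s1 l2 m \<ge> -1" "s2 l2 m \<ge> -1" "s5 l2 m \<ge> -1" "s6 l1 m \<ge> -1"
    "s3 l2 m = s4 l2 m" "s3 l2 m \<le> 0" "even (s3 l2 m)" using assms(1) by (auto simp: Bres_def)
  have "hdA (Aof l1 l2 m) = Some (Aof l1 l2 m)" using assms(2) by (simp add: is_head_def)
  hence "m5 m + min (m2 m) (m6 m) = 0" by (simp add: Aof_def hdA_Arr)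
  hence H: "m5 m = 0" "m3 m = 0" "min (m2 m) (m6 m) = 0" using B(1) by auto
  obtain j where j: "s3 l2 m = 2 * j" using B(8) by (auto elim: evenE)
  define D where "D = nat (- j)"
  have sD: "s3 l2 m = - 2 * int D" using j B(7) by (simp add: D_def)
  have dm: "deco l2 m = D" using sD by (rule deco_eq)
  have m4D: "int (m4 m) = int l2 + int (m6 m) + 2 * int D" using sD H by (simp add: s3_def)
  define P where "P = nat (min (s2 l2 m) (s5 l2 m) + 1)"
  define Q where "Q = nat (s6 l1 m + 1)"
  have PI: "int P = min (s2 l2 m) (s5 l2 m) + 1" using B(3,4) unfolding P_def by (simp add: min_def)
  have QI: "int Q = s6 l1 m + 1" using B by (simp add: Q_def)
  have P5: "int P \<le> int l2 + 1" using B H by (simp add: P_def s5_def)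
  have Q6: "m6 m = 0 \<Longrightarrow> Q \<ge> 1" by (simp add: Q_def s6_def)
  define sh where "sh t1 t2 = LD (m1 m) (m2 m + t1) (m3 m + t2) (m4 m - 3*t2 - t1) (m5 m + t2) (m6 m + t1)" for t1 t2
  have key: "iterp t1 (f1L l1 l2) (iterp t2 (f2L l1 l2) (Some m)) = Some (sh t1 t2)
      \<and> sh t1 t2 \<in> RF l1 l2 m \<and> s3 l2 (sh t1 t2) = - 2 * int (D - t1 - t2)"
    if t: "t2 \<le> P" "t1 \<le> Q" "t1 + t2 \<le> D" "3*t2 + t1 \<le> m4 m" for t1 t2
  proof -
    define m' where "m' = LD (m1 m) (m2 m) (m3 m + t2) (m4 m - 3*t2) (m5 m + t2) (m6 m)"
    have "int t2 \<le> int P" "int t1 \<le> int Q" using t by simp_all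
    hence tI: "int t2 \<le> s2 l2 m + 1" "int t2 \<le> s5 l2 m + 1" "int t1 \<le> s6 l1 m + 1"
      using PI QI by linarith+
    have i2: "iterp t2 (f2L l1 l2) (Some m) = Some m'"
      using t tI by (simp add: iter_f2L[OF sD B(3) B(4)] m'_def)
    have s3': "s3 l2 m' = - 2 * int (D - t2)" using sD t by (simp add: m'_def s3_def)
    have s6': "s6 l1 m' = s6 l1 m" by (simp add: m'_def s6_def)
    have s6m: "s6 l1 m' \<ge> -1" using s6' B(5) by simp
    have i1: "iterp t1 (f1L l1 l2) (Some m') = Some (sh t1 t2)"
      unfolding iter_f1L[OF s3' s6m] using t tI s6' by (simp add: m'_def sh_def; linarith)
    have s3s: "s3 l2 (sh t1 t2) = - 2 * int (D - t1 - t2)" using sD t by (simp add: sh_def s3_def)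
    have s4s: "s4 l2 (sh t1 t2) = s3 l2 (sh t1 t2)" using B(1) t by (simp add: sh_def s3_def s4_def)
    have oth: "m3 (sh t1 t2) = m5 (sh t1 t2) \<and> s1 l2 (sh t1 t2) \<ge> -1 \<and> s2 l2 (sh t1 t2) \<ge> -1
       \<and> s5 l2 (sh t1 t2) \<ge> -1 \<and> s6 l1 (sh t1 t2) \<ge> -1"
      using t B H tI by (simp add: sh_def s1_def s2_def s5_def s6_def)
    have bres: "sh t1 t2 \<in> Bres l1 l2"
      unfolding Bres_def using s3s s4s oth by simp
    have wt: "wt (sh t1 t2) = wt m" using t by (simp add: sh_def wt_def)
    have mt: "min (m2 m + t1) (m6 m + t1) = t1" using H(3) by (simp add: min_def split: if_splits)
    have dsh: "deco l2 (sh t1 t2) = D - t1 - t2" using s3s by (rule deco_eq)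
    have e2: "s2 l2 (sh t1 t2) + 1 = (s2 l2 m + 1) - int t2" using H by (simp add: sh_def s2_def)
    have e5: "s5 l2 (sh t1 t2) + 1 = (s5 l2 m + 1) - int t2" by (simp add: sh_def s5_def)
    have e6: "s6 l1 (sh t1 t2) + 1 = (s6 l1 m + 1) - int t1" by (simp add: sh_def s6_def)
    have "hdA (Aof l1 l2 (sh t1 t2)) = Some (Aof l1 l2 m)"
      unfolding Aof_def dsh dm e2 e5 e6 hdA_Arr
      using tI t natl[of t2 "s2 l2 m + 1"] natl[of t2 "s5 l2 m + 1"] natl[of t1 "s6 l1 m + 1"]
      by (simp add: sh_def mt H)
    moreover have "hdA (Aof l1 l2 m) = Some (Aof l1 l2 m)" using assms(2) by (simp add: is_head_def)
    ultimately have "sh t1 t2 \<in> RF l1 l2 m" using bres wt by (simp add: RF_def)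
    thus ?thesis using i1 i2 s3s by simp
  qed
  have DPQ: "D \<ge> P + Q + 1"
  proof (rule ccontr)
    assume "\<not> ?thesis"
    define t1 where "t1 = min Q D"
    define t2 where "t2 = D - t1"
    have t: "t2 \<le> P" "t1 \<le> Q" "t1 + t2 \<le> D" using \<open>\<not> _\<close> by (auto simp: t1_def t2_def)
    have "3*t2 + t1 \<le> m4 m"
    proof -
      have "t2 \<le> l2 + m6 m + t1"
      proof (cases "t2 = 0")
        case False
        hence "t1 = Q" by (auto simp: t1_def t2_def)
        thus ?thesis using P5 t Q6 by (cases "m6 m = 0") auto
      qed simp
      thus ?thesis using m4D t by (simp add: t2_def)
    qed
    note k = key[OF t this]
    have "s3 l2 (sh t1 t2) = 0" using k t by (simp add: t2_def)
    moreover have "sh t1 t2 \<in> Bres l1 l2" using k by (simp add: RF_def)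
    ultimately have "sh t1 t2 \<in> Bset l1 l2" by (simp add: Bres_def Bset_def)
    thus False using k assms(3) by blast
  qed
  have key2: "iterp t1 (f1L l1 l2) (iterp t2 (f2L l1 l2) (Some m)) = Some (sh t1 t2)
      \<and> sh t1 t2 \<in> RF l1 l2 m"
    if t: "int t1 \<le> s6 l1 m + 1" "int t2 \<le> min (s2 l2 m) (s5 l2 m) + 1" for t1 t2
  proof -
    have t': "t2 \<le> P" "t1 \<le> Q" using t by (auto simp: P_def Q_def)
    have "3*t2 + t1 \<le> m4 m" using t' m4D DPQ P5 by linarith
    thus ?thesis using key[OF t'] t' DPQ by simp
  qed
  have sub: "n \<in> {the (iterp t1 (f1L l1 l2) (iterp t2 (f2L l1 l2) (Some m))) | t1 t2.
            int t1 \<le> s6 l1 m + 1 \<and> int t2 \<le> min (s2 l2 m) (s5 l2 m) + 1}"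
    if n: "n \<in> RF l1 l2 m" for n
  proof -
    have Bn: "m3 n = m5 n" "s2 l2 n \<ge> -1" "s5 l2 n \<ge> -1" "s6 l1 n \<ge> -1"
      using n by (auto simp: RF_def Bres_def)
    have w: "wt n = wt m" using n by (simp add: RF_def)
    have "hdA (Aof l1 l2 n) = Some (Aof l1 l2 m)"
      using n assms(2) by (simp add: RF_def is_head_def)
    hence E: "m2 n - min (m2 n) (m6 n) = m2 m" "m4 n + 3 * m5 n + min (m2 n) (m6 n) = m4 m"
      "m6 n - min (m2 n) (m6 n) = m6 m" "m5 m = 0"
      "nat (s2 l2 n + 1) + m5 n = nat (s2 l2 m + 1)"
      "nat (s6 l1 n + 1) + min (m2 n) (m6 n) = nat (s6 l1 m + 1)"
      "nat (s5 l2 n + 1) + m5 n = nat (s5 l2 m + 1)"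
      by (simp_all add: Aof_def hdA_Arr)
    define t1 where "t1 = min (m2 n) (m6 n)"
    define t2 where "t2 = m5 n"
    have b1: "int t1 \<le> s6 l1 m + 1" using E(6) Bn B by (simp add: t1_def)
    have b2: "int t2 \<le> min (s2 l2 m) (s5 l2 m) + 1" using E(5,7) Bn B by (simp add: t2_def)
    have "n = sh t1 t2"
    proof -
      have ml: "t1 \<le> m2 n" "t1 \<le> m6 n" by (simp_all add: t1_def)
      have q2: "m2 n = m2 m + t1" using E(1) ml unfolding t1_def[symmetric] by linarith
      have q6: "m6 n = m6 m + t1" using E(3) ml unfolding t1_def[symmetric] by linarith
      have q4: "m4 n = m4 m - 3*t2 - t1" using E(2) unfolding t1_def[symmetric] t2_def[symmetric] by linarith
      have "snd (wt n) = snd (wt m)" using w by simp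
      hence "m1 n + m2 n + 2 * m3 n + m4 n + m5 n = m1 m + m2 m + 2 * m3 m + m4 m + m5 m"
        by (simp add: wt_def)
      hence q1: "m1 n = m1 m" using q2 q4 E(2) H Bn(1) unfolding t1_def[symmetric] t2_def[symmetric] by linarith
      show ?thesis using q1 q2 q4 q6 H Bn(1) by (cases n) (simp add: sh_def t2_def)
    qed
    hence "n = the (iterp t1 (f1L l1 l2) (iterp t2 (f2L l1 l2) (Some m)))"
      using key2[OF b1 b2] by simp
    thus ?thesis using b1 b2 by blast
  qed
  show ?thesis
  proof (intro conjI allI impI set_eqI iffI)
    fix t1 t2 assume "int t1 \<le> s6 l1 m + 1" "int t2 \<le> min (s2 l2 m) (s5 l2 m) + 1"
    thus "iterp t1 (f1L l1 l2) (iterp t2 (f2L l1 l2) (Some m)) \<noteq> None" using key2 by simp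
  next
    fix n assume "n \<in> RF l1 l2 m" thus "n \<in> {the (iterp t1 (f1L l1 l2) (iterp t2 (f2L l1 l2) (Some m))) | t1 t2.
            int t1 \<le> s6 l1 m + 1 \<and> int t2 \<le> min (s2 l2 m) (s5 l2 m) + 1}" by (rule sub)
  next
    fix n assume "n \<in> {the (iterp t1 (f1L l1 l2) (iterp t2 (f2L l1 l2) (Some m))) | t1 t2.
            int t1 \<le> s6 l1 m + 1 \<and> int t2 \<le> min (s2 l2 m) (s5 l2 m) + 1}"
    thus "n \<in> RF l1 l2 m" using key2 by auto
  qed
qed

end
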